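(* Let $d\ge1$, $f$ a monic hyperbolic polynomial of degree $d$, $0\le s\le d$, and $u$ a composition of $d$ with $\ell(u)\le s$. Then $H_s^u(f)$ contains at most one polynomial.
   Context: Hyperbolic: all roots real. $f=t^d+f_1t^{d-1}+\dots+f_d$; $H_s(f)$ is the set of monic hyperbolic degree-$d$ polynomials $h=t^d+h_1t^{d-1}+\dots+h_d$ with $h_i=f_i$ for $1\le i\le s$. Compositions of $d$: tuples of positive integers summing to $d$, length $\ell(u)$; $v\le u$ iff $v$ arises from $u$ by merging consecutive parts. $v(h)$ is the tuple of multiplicities of the distinct roots of $h$ in increasing order; $H_s^u(f)=\{h\in H_s(f):v(h)\le u\}$. *)

theory Defs
  imports "HOL-Computational_Algebra.Polynomial" Complex_Main
begin

definition monic_deg :: "nat \<Rightarrow> real poly \<Rightarrow> bool" where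
  "monic_deg d h \<longleftrightarrow> degree h = d \<and> lead_coeff h = 1"

definition hyperbolic :: "real poly \<Rightarrow> bool" where
  "hyperbolic h \<longleftrightarrow> (\<forall>z::complex. poly (map_poly of_real h) z = 0 \<longrightarrow> z \<in> \<real>)"

text \<open>The i-th coefficient h_i of h = t^d + h_1 t^(d-1) + ... + h_d.\<close>
definition hcoeff :: "nat \<Rightarrow> real poly \<Rightarrow> nat \<Rightarrow> real" where
  "hcoeff d h i = coeff h (d - i)"

definition H_s :: "nat \<Rightarrow> nat \<Rightarrow> real poly \<Rightarrow> real poly set" where
  "H_s d s f = {h. monic_deg d h \<and> hyperbolic h \<and> (\<forall>i. 1 \<le> i \<and> i \<le> s \<longrightarrow> hcoeff d h i = hcoeff d f i)}"

definition composition :: "nat \<Rightarrow> nat list \<Rightarrow> bool" where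
  "composition d u \<longleftrightarrow> (\<forall>x\<in>set u. 0 < x) \<and> sum_list u = d"

text \<open>v \<le> u iff v arises from u by merging consecutive parts.\<close>
definition comp_le :: "nat list \<Rightarrow> nat list \<Rightarrow> bool" where
  "comp_le v u \<longleftrightarrow> (\<exists>bs :: nat list list. concat bs = u \<and> (\<forall>b\<in>set bs. b \<noteq> []) \<and> v = map sum_list bs)"

definition mult_vec :: "real poly \<Rightarrow> nat list" where
  "mult_vec h = map (\<lambda>x. order x h) (sorted_list_of_set {x. poly h x = 0})"

definition H_su :: "nat \<Rightarrow> nat \<Rightarrow> nat list \<Rightarrow> real poly \<Rightarrow> real poly set" where
  "H_su d s u f = {h \<in> H_s d s f. comp_le (mult_vec h) u}"

end

theory Submission
  imports Defs "HOL-Computational_Algebra.Fundamental_Theorem_Algebra"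
begin


definition res :: "real poly \<Rightarrow> real poly \<Rightarrow> real" where
  "res h Q = coeff (Q * pderiv h mod h) (degree h - 1)"

lemma coeff_mult_monic:
  fixes B g :: "real poly"
  assumes "degree B \<le> k" "lead_coeff g = 1"
  shows "coeff (B*g) (k + degree g) = coeff B k"
proof (cases "degree B = k")
  case True then show ?thesis using coeff_mult_degree_sum[of B g] assms by simp
next
  case False
  hence "degree B < k" using assms by simp
  moreover have "degree (B*g) \<le> degree B + degree g" by (rule degree_mult_le)
  ultimately show ?thesis by (simp add: coeff_eq_0)
qed

lemma mod_unique:
  fixes y r A :: "real poly"
  assumes "y \<noteq> 0" "degree r < degree y \<or> r = 0"
  shows "(A*y + r) mod y = r"
proof -
  have "(A*y + r) mod y = (r + A*y) mod y" by (simp add: add.commute)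
  also have "\<dots> = r mod y" by (rule mod_mult_self1)
  also have "\<dots> = r" using assms mod_poly_less by auto
  finally show ?thesis .
qed

lemma deg_mod_lt:
  fixes x y :: "real poly"
  assumes "y \<noteq> 0"
  shows "degree (x mod y) < degree y \<or> x mod y = 0"
  using degree_mod_less[OF assms, of x] by auto

lemma res_mult:
  fixes f g Q :: "real poly"
  assumes f: "lead_coeff f = 1" and g: "lead_coeff g = 1"
  shows "res (f*g) Q = res f Q + res g Q"
proof -
  have f0: "f \<noteq> 0" and g0: "g \<noteq> 0" using f g by auto
  define m where "m = degree f"
  define n where "n = degree g"
  show ?thesis
  proof (cases "m = 0 \<or> n = 0")
    case True
    then show ?thesis
    proof
      assume "m = 0"
      then have "f = 1" using f m_def by (metis coeff_pCons_0 degree_eq_zeroE one_pCons pCons_0_0)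
      then show ?thesis by (simp add: res_def)
    next
      assume "n = 0"
      then have "g = 1" using g n_def by (metis coeff_pCons_0 degree_eq_zeroE one_pCons pCons_0_0)
      then show ?thesis by (simp add: res_def)
    qed
  next
    case False
    hence mn: "m \<ge> 1" "n \<ge> 1" by auto
    define A where "A = Q * pderiv f div f"
    define B where "B = Q * pderiv f mod f"
    define C where "C = Q * pderiv g div g"
    define D where "D = Q * pderiv g mod g"
    have e1: "Q * pderiv f = A*f + B" unfolding A_def B_def by simp
    have e2: "Q * pderiv g = C*g + D" unfolding C_def D_def by simp
    have dB: "degree B \<le> m - 1" using deg_mod_lt[OF f0, of "Q*pderiv f"] mn unfolding B_def m_def by auto
    have dD: "degree D \<le> n - 1" using deg_mod_lt[OF g0, of "Q*pderiv g"] mn unfolding D_def n_def by auto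
    have dfg: "degree (f*g) = m + n" using f0 g0 m_def n_def by (simp add: degree_mult_eq)
    have "Q * pderiv (f*g) = g*(Q*pderiv f) + f*(Q*pderiv g)"
      by (simp add: pderiv_mult algebra_simps)
    also have "\<dots> = (A + C) * (f*g) + (B*g + f*D)"
      by (simp add: e1 e2 algebra_simps)
    finally have e3: "Q * pderiv (f*g) = (A + C) * (f*g) + (B*g + f*D)" .
    have "degree (B*g) \<le> m - 1 + n" using dB degree_mult_le[of B g] n_def by linarith
    moreover have "degree (f*D) \<le> m + (n - 1)" using dD degree_mult_le[of f D] m_def by linarith
    ultimately have "degree (B*g + f*D) \<le> m + n - 1" using mn
      by (intro degree_add_le) linarith+
    hence "degree (B*g + f*D) < degree (f*g)" using dfg mn by linarith
    hence md: "Q * pderiv (f*g) mod (f*g) = B*g + f*D"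
      using e3 mod_unique[of "f*g" "B*g+f*D" "A+C"] f0 g0 by simp
    have c1: "coeff (B*g) (m + n - 1) = coeff B (m - 1)"
      using coeff_mult_monic[OF dB g] mn n_def by (metis Nat.add_diff_assoc2)
    have c2: "coeff (D*f) (n + m - 1) = coeff D (n - 1)"
      using coeff_mult_monic[OF dD f] mn m_def by (metis Nat.add_diff_assoc2)
    show ?thesis unfolding res_def md using c1 c2 dfg
      by (simp add: B_def D_def m_def n_def mult.commute add.commute)
  qed
qed
lemma res_linear: "res [:-r,1:] Q = poly Q r"
proof -
  have "Q * pderiv [:-r,1:] = synthetic_div Q r * [:-r,1:] + [:poly Q r:]"
    using synthetic_div_correct'[of r Q] by (simp add: pderiv_pCons mult.commute)
  hence "Q * pderiv [:-r,1:] mod [:-r,1:] = [:poly Q r:]"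
    using mod_unique[of "[:-r,1:]" "[:poly Q r:]" "synthetic_div Q r"] by simp
  thus ?thesis by (simp add: res_def)
qed

lemma res_one: "res 1 Q = 0" by (simp add: res_def)

lemma res_power:
  assumes "lead_coeff p = 1"
  shows "res (p^m) Q = of_nat m * res p Q"
proof (induction m)
  case 0 then show ?case by (simp add: res_one)
next
  case (Suc m)
  have "res (p^Suc m) Q = res (p * p^m) Q" by simp
  also have "\<dots> = res p Q + res (p^m) Q"
    using assms by (intro res_mult) (auto simp: lead_coeff_power)
  finally show ?case using Suc by (simp add: algebra_simps)
qed

definition pp :: "real list \<Rightarrow> nat list \<Rightarrow> real poly" where
  "pp ys ms = prod_list (map (\<lambda>(y,m). [:-y,1:]^m) (zip ys ms))"

lemma pp_Cons: "pp (y#ys) (m#ms) = [:-y,1:]^m * pp ys ms"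
  by (simp add: pp_def)

lemma pp_Nil: "pp [] ms = 1" "pp ys [] = 1" by (simp_all add: pp_def)

lemma pp_monic: "lead_coeff (pp ys ms) = 1"
proof (induction ys arbitrary: ms)
  case Nil then show ?case by (simp add: pp_Nil)
next
  case (Cons y ys) then show ?case
    by (cases ms) (simp_all add: pp_Nil pp_Cons lead_coeff_mult lead_coeff_power)
qed

lemma res_pp: "res (pp ys ms) Q = sum_list (map (\<lambda>(y,m). of_nat m * poly Q y) (zip ys ms))"
proof (induction ys arbitrary: ms)
  case Nil then show ?case by (simp add: pp_Nil res_one)
next
  case (Cons y ys) then show ?case
  proof (cases ms)
    case Nil then show ?thesis by (simp add: pp_Nil res_one)
  next
    case (Cons m ms')
    have "res (pp (y#ys) ms) Q = res ([:-y,1:]^m) Q + res (pp ys ms') Q"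
      unfolding Cons pp_Cons by (intro res_mult) (simp_all add: pp_monic lead_coeff_power)
    also have "\<dots> = of_nat m * poly Q y + res (pp ys ms') Q"
      by (simp add: res_power res_linear)
    finally show ?thesis using Cons.IH Cons by simp
  qed
qed




definition SP :: "real list \<Rightarrow> real list \<Rightarrow> real poly \<Rightarrow> real \<Rightarrow> bool" where
  "SP xs ys q e \<longleftrightarrow> degree q \<le> length xs - 1 \<and> (e = 1 \<or> e = -1) \<and>
     (\<forall>(a,b)\<in>set (zip xs ys). (\<forall>x. a<x \<and> x<b \<longrightarrow> poly q x > 0) \<and> (\<forall>x. b<x \<and> x<a \<longrightarrow> poly q x < 0)) \<and>
     (\<forall>x. x < max (hd xs) (hd ys) \<longrightarrow> e * poly q x > 0) \<and>
     (\<forall>(a,b)\<in>set (zip xs ys). a \<noteq> b \<longrightarrow> (e = -1 \<longrightarrow> hd ys \<le> a) \<and> (e = 1 \<longrightarrow> hd xs \<le> b))"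

lemma sorted_hd_le: "sorted xs \<Longrightarrow> x \<in> set xs \<Longrightarrow> hd xs \<le> (x::real)"
  by (cases xs) auto

lemma SP_single: "\<exists>q e. SP [a] [b] q e"
proof -
  define e :: real where "e = (if b < a then -1 else 1)"
  have "SP [a] [b] [:e:] e" unfolding SP_def e_def by auto
  thus ?thesis by blast
qed

lemma SP_step:
  assumes IH: "SP xs ys q e" and ne: "xs \<noteq> []" "ys \<noteq> []"
    and sx: "sorted (a#xs)" and sy: "sorted (b#ys)" and len: "length xs = length ys"
  shows "\<exists>q e. SP (a#xs) (b#ys) q e"
proof -
  define a0 where "a0 = hd xs"
  define b0 where "b0 = hd ys"
  have aa0: "a \<le> a0" using sx ne unfolding a0_def by (cases xs) auto
  have bb0: "b \<le> b0" using sy ne unfolding b0_def by (cases ys) auto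
  have sx': "sorted xs" and sy': "sorted ys" using sx sy by auto
  have inz: "a0 \<le> aj \<and> b0 \<le> bj" if "(aj,bj) \<in> set (zip xs ys)" for aj bj
    using that sorted_hd_le[OF sx'] sorted_hd_le[OF sy'] unfolding a0_def b0_def
    by (meson set_zip_leftD set_zip_rightD)
  have dq: "degree q \<le> length xs - 1" and ee: "e = 1 \<or> e = -1" using IH unfolding SP_def by auto
  have S2: "(\<forall>x. aj<x \<and> x<bj \<longrightarrow> poly q x > 0) \<and> (\<forall>x. bj<x \<and> x<aj \<longrightarrow> poly q x < 0)"
    if "(aj,bj)\<in>set (zip xs ys)" for aj bj using IH that unfolding SP_def by fast
  have S3: "e * poly q x > 0" if "x < max a0 b0" for x using IH that unfolding SP_def a0_def b0_def by auto
  have S6: "(e = -1 \<longrightarrow> b0 \<le> aj) \<and> (e = 1 \<longrightarrow> a0 \<le> bj)"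
    if "(aj,bj)\<in>set (zip xs ys)" "aj \<noteq> bj" for aj bj using IH that unfolding SP_def a0_def b0_def by fast
  have lxs: "length (a#xs) - 1 = length xs" by simp
  show ?thesis
  proof (cases "(a < b \<and> e = -1) \<or> (b < a \<and> e = 1)")
    case True
    define z where "z = max a b"
    define q' where "q' = [:-z,1:] * q"
    have pq': "poly q' x = (x - z) * poly q x" for x unfolding q'_def by (simp add: algebra_simps)
    have zm: "z \<le> max a0 b0" unfolding z_def using aa0 bb0 by linarith
    have K: "z \<le> aj \<and> z \<le> bj" if "(aj,bj) \<in> set (zip xs ys)" "aj \<noteq> bj" for aj bj
      using True S6[OF that] inz[OF that(1)] aa0 bb0 unfolding z_def by auto
    have "SP (a#xs) (b#ys) q' (-e)"
      unfolding SP_def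
    proof (intro conjI)
      show "degree q' \<le> length (a#xs) - 1" unfolding q'_def lxs
        using degree_mult_le[of "[:-z,1:]" q] dq ne by (cases xs) auto
      show "- e = 1 \<or> - e = - 1" using ee by auto
      show "\<forall>(aj,bj)\<in>set (zip (a#xs) (b#ys)). (\<forall>x. aj<x \<and> x<bj \<longrightarrow> poly q' x > 0) \<and> (\<forall>x. bj<x \<and> x<aj \<longrightarrow> poly q' x < 0)"
      proof -
        have H1: "poly q' x > 0" if "a < x" "x < b" for x
        proof -
          have "x < z" "e = -1" using True that unfolding z_def by auto
          hence "poly q x < 0" using S3[of x] zm by auto
          thus ?thesis using \<open>x < z\<close> pq' by (simp add: mult_neg_neg)
        qed
        have H2: "poly q' x < 0" if "b < x" "x < a" for x
        proof -
          have "x < z" "e = 1" using True that unfolding z_def by auto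
          hence "poly q x > 0" using S3[of x] zm by auto
          thus ?thesis using \<open>x < z\<close> pq' by (simp add: mult_neg_pos)
        qed
        have T1: "poly q' x > 0" if m: "(aj,bj) \<in> set (zip xs ys)" "aj < x" "x < bj" for aj bj x
        proof -
          have "z < x" using K[OF m(1)] m by auto
          thus ?thesis using S2[OF m(1)] m pq' by simp
        qed
        have T2: "poly q' x < 0" if m: "(aj,bj) \<in> set (zip xs ys)" "bj < x" "x < aj" for aj bj x
        proof -
          have "z < x" using K[OF m(1)] m by auto
          thus ?thesis using S2[OF m(1)] m pq' by (simp add: mult_pos_neg)
        qed
        show ?thesis using H1 H2 T1 T2 by auto
      qed
      show "\<forall>x. x < max (hd (a#xs)) (hd (b#ys)) \<longrightarrow> (-e) * poly q' x > 0"
      proof (intro allI impI)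
        fix x assume "x < max (hd (a#xs)) (hd (b#ys))"
        hence "x < z" unfolding z_def by simp
        hence "e * poly q x > 0" using S3 zm by auto
        moreover have "(-e) * poly q' x = (z - x) * (e * poly q x)" unfolding pq' by (simp add: algebra_simps)
        ultimately show "(-e) * poly q' x > 0" using \<open>x < z\<close> by simp
      qed
      show "\<forall>(aj,bj)\<in>set (zip (a#xs) (b#ys)). aj \<noteq> bj \<longrightarrow> (-e = -1 \<longrightarrow> hd (b#ys) \<le> aj) \<and> (-e = 1 \<longrightarrow> hd (a#xs) \<le> bj)"
        using True inz aa0 bb0 ee by fastforce
    qed
    thus ?thesis by blast
  next
    case False
    have A: "a < b \<Longrightarrow> e = 1" "b < a \<Longrightarrow> e = -1" using False ee by auto
    have "SP (a#xs) (b#ys) q e"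
      unfolding SP_def
    proof (intro conjI)
      show "degree q \<le> length (a#xs) - 1" using dq by simp
      show "e = 1 \<or> e = - 1" by (rule ee)
      show "\<forall>(aj,bj)\<in>set (zip (a#xs) (b#ys)). (\<forall>x. aj<x \<and> x<bj \<longrightarrow> poly q x > 0) \<and> (\<forall>x. bj<x \<and> x<aj \<longrightarrow> poly q x < 0)"
      proof -
        have H1: "poly q x > 0" if "a < x" "x < b" for x using A S3[of x] bb0 that by fastforce
        have H2: "poly q x < 0" if "b < x" "x < a" for x using A S3[of x] aa0 that by fastforce
        show ?thesis using H1 H2 S2 by auto
      qed
      show "\<forall>x. x < max (hd (a#xs)) (hd (b#ys)) \<longrightarrow> e * poly q x > 0"
        using S3 aa0 bb0 by fastforce
      show "\<forall>(aj,bj)\<in>set (zip (a#xs) (b#ys)). aj \<noteq> bj \<longrightarrow> (e = -1 \<longrightarrow> hd (b#ys) \<le> aj) \<and> (e = 1 \<longrightarrow> hd (a#xs) \<le> bj)"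
        using A inz aa0 bb0 ee S6 by fastforce
    qed
    thus ?thesis by blast
  qed
qed




lemma res_eq:
  fixes f g Q :: "real poly"
  assumes f: "lead_coeff f = 1" and g: "lead_coeff g = 1"
    and df: "degree f = d" and dg: "degree g = d" and d1: "d \<ge> 1"
    and dQ: "degree Q \<le> s"
    and co: "\<forall>i\<ge>d - s. coeff f i = coeff g i"
  shows "res f Q = res g Q"
proof (cases "f = g")
  case True then show ?thesis by simp
next
  case False
  define D where "D = f - g"
  have D0: "D \<noteq> 0" using False D_def by simp
  have "coeff D (degree D) \<noteq> 0" using D0 by simp
  hence dD: "degree D < d - s" using co unfolding D_def by (metis coeff_diff diff_self not_le)
  have f0: "f \<noteq> 0" and g0: "g \<noteq> 0" using f g by auto
  define A1 where "A1 = Q * pderiv f div f"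
  define B1 where "B1 = Q * pderiv f mod f"
  define A2 where "A2 = Q * pderiv g div g"
  define B2 where "B2 = Q * pderiv g mod g"
  have e1: "Q * pderiv f = A1*f + B1" unfolding A1_def B1_def by simp
  have e2: "Q * pderiv g = A2*g + B2" unfolding A2_def B2_def by simp
  have dB1: "degree B1 \<le> d - 1" using deg_mod_lt[OF f0, of "Q*pderiv f"] d1 df unfolding B1_def by auto
  have dB2: "degree B2 \<le> d - 1" using deg_mod_lt[OF g0, of "Q*pderiv g"] d1 dg unfolding B2_def by auto
  define X where "X = Q * (pderiv f * g - f * pderiv g)"
  have X1: "X = (A1 - A2)*(f*g) + (B1*g - f*B2)"
  proof -
    have "X = g * (Q * pderiv f) - f * (Q * pderiv g)" unfolding X_def by (simp add: algebra_simps)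
    also have "\<dots> = (A1 - A2)*(f*g) + (B1*g - f*B2)" by (simp add: e1 e2 algebra_simps)
    finally show ?thesis .
  qed
  have "f = D + g" unfolding D_def by simp
  hence X2: "X = Q * (pderiv D * g - D * pderiv g)"
    unfolding X_def by (simp add: pderiv_add algebra_simps)
  have t1: "degree (pderiv D * g) \<le> 2*d - s - 2"
  proof (cases "degree D = 0")
    case True
    then have "pderiv D = 0" by (simp add: pderiv_eq_0_iff)
    then show ?thesis by simp
  next
    case False
    have "degree (pderiv D * g) \<le> degree (pderiv D) + degree g" by (rule degree_mult_le)
    also have "\<dots> = degree D - 1 + d" by (simp add: degree_pderiv dg)
    finally show ?thesis using False dD by linarith
  qed
  have t2: "degree (D * pderiv g) \<le> 2*d - s - 2"
  proof -
    have "degree (D * pderiv g) \<le> degree D + degree (pderiv g)" by (rule degree_mult_le)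
    also have "\<dots> = degree D + (d - 1)" by (simp add: degree_pderiv dg)
    finally show ?thesis using dD d1 by linarith
  qed
  have "degree (pderiv D * g - D * pderiv g) \<le> 2*d - s - 2"
    using t1 t2 by (rule degree_diff_le)
  moreover have "degree X \<le> degree Q + degree (pderiv D * g - D * pderiv g)"
    unfolding X2 by (rule degree_mult_le)
  ultimately have dX: "degree X \<le> 2*d - 2" using dQ dD by linarith
  have dR: "degree (B1*g - f*B2) \<le> 2*d - 1"
  proof (rule degree_diff_le)
    show "degree (B1*g) \<le> 2*d - 1" using degree_mult_le[of B1 g] dB1 dg d1 by linarith
    show "degree (f*B2) \<le> 2*d - 1" using degree_mult_le[of f B2] dB2 df d1 by linarith
  qed
  have dfg: "degree (f*g) = 2*d" using f0 g0 df dg by (simp add: degree_mult_eq)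
  have AA: "A1 = A2"
  proof (rule ccontr)
    assume "A1 \<noteq> A2"
    hence "degree ((A1 - A2)*(f*g)) \<ge> 2*d" using dfg f0 g0 by (simp add: degree_mult_eq)
    hence "degree X = degree ((A1 - A2)*(f*g))"
      unfolding X1 using dR d1 by (intro degree_add_eq_left) linarith
    thus False using dX \<open>degree ((A1 - A2)*(f*g)) \<ge> 2*d\<close> d1 by linarith
  qed
  hence X3: "X = B1*g - B2*f" using X1 by (simp add: mult.commute)
  have "coeff X (2*d - 1) = 0" using dX d1 by (intro coeff_eq_0) linarith
  moreover have "coeff (B1*g) (d - 1 + d) = coeff B1 (d - 1)" using coeff_mult_monic[OF dB1 g] dg by simp
  moreover have "coeff (B2*f) (d - 1 + d) = coeff B2 (d - 1)" using coeff_mult_monic[OF dB2 f] df by simp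
  moreover have "2*d - 1 = d - 1 + d" using d1 by simp
  ultimately have "coeff B1 (d - 1) = coeff B2 (d - 1)" unfolding X3 by simp
  thus ?thesis unfolding res_def B1_def B2_def df dg .
qed




lemma SP_exists:
  assumes "length xs = length ys" "xs \<noteq> []" "sorted xs" "sorted ys"
  shows "\<exists>q e. SP xs ys q e"
  using assms
proof (induction xs ys rule: list_induct2)
  case Nil then show ?case by simp
next
  case (Cons a xs b ys)
  show ?case
  proof (cases "xs = []")
    case True
    then have "ys = []" using Cons.hyps by simp
    then show ?thesis using True SP_single by simp
  next
    case False
    then have "ys \<noteq> []" using Cons.hyps by auto
    from Cons.IH[OF False] Cons.prems obtain q e where "SP xs ys q e" by auto
    then show ?thesis using SP_step False \<open>ys \<noteq> []\<close> Cons by blast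
  qed
qed

lemma pderiv_sum': "pderiv (sum f S) = sum (\<lambda>i. pderiv (f i)) S"
  by (induction S rule: infinite_finite_induct) (simp_all add: pderiv_add)

lemma antideriv:
  fixes q :: "real poly"
  shows "\<exists>Q. pderiv Q = q \<and> degree Q \<le> degree q + 1"
proof -
  define Q where "Q = (\<Sum>i\<le>degree q. monom (coeff q i / of_nat (Suc i)) (Suc i))"
  have "pderiv Q = (\<Sum>i\<le>degree q. monom (coeff q i) i)"
    unfolding Q_def pderiv_sum' pderiv_monom by (intro sum.cong) (simp_all del: of_nat_Suc)
  also have "\<dots> = q" by (rule poly_as_sum_of_monoms)
  finally have "pderiv Q = q" .
  moreover have "degree Q \<le> degree q + 1" unfolding Q_def
    by (intro degree_sum_le) (auto intro: order.trans[OF degree_monom_le])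
  ultimately show ?thesis by blast
qed

lemma mono_Q:
  fixes Q :: "real poly"
  assumes pos: "\<And>x. a < x \<Longrightarrow> x < b \<Longrightarrow> poly (pderiv Q) x > 0" and ab: "a < b"
  shows "poly Q a < poly Q b"
  by (rule DERIV_pos_imp_increasing_open[OF ab]) (use pos in \<open>auto intro: poly_DERIV continuous_intros\<close>)

lemma mono_Q':
  fixes Q :: "real poly"
  assumes neg: "\<And>x. a < x \<Longrightarrow> x < b \<Longrightarrow> poly (pderiv Q) x < 0" and ab: "a < b"
  shows "poly Q a > poly Q b"
  by (rule DERIV_neg_imp_decreasing_open[OF ab]) (use neg in \<open>auto intro: poly_DERIV continuous_intros\<close>)

lemma SP_Q:
  assumes "SP xs ys q e" "pderiv Q = q" "(a,b) \<in> set (zip xs ys)" "a \<noteq> b"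
  shows "poly Q a < poly Q b"
proof -
  have S2: "(\<forall>x. a<x \<and> x<b \<longrightarrow> poly q x > 0) \<and> (\<forall>x. b<x \<and> x<a \<longrightarrow> poly q x < 0)"
    using assms(1,3) unfolding SP_def by fast
  show ?thesis
  proof (cases "a < b")
    case True then show ?thesis using mono_Q[of a b Q] S2 assms(2) by auto
  next
    case False then have "b < a" using assms(4) by auto
    then show ?thesis using mono_Q'[of b a Q] S2 assms(2) by auto
  qed
qed

lemma sum_eq_imp:
  fixes Q :: "real poly"
  assumes "length xs = length ys" "length ys = length ms"
    and "\<forall>m\<in>set ms. 0 < m"
    and "\<forall>(a,b)\<in>set (zip xs ys). a \<noteq> b \<longrightarrow> poly Q a < poly Q b"
    and "sum_list (map (\<lambda>(y,m). of_nat m * poly Q y) (zip xs ms)) = sum_list (map (\<lambda>(y,m). of_nat m * poly Q y) (zip ys ms))"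
  shows "xs = ys"
  using assms
proof (induction xs ys ms rule: list_induct3)
  case Nil then show ?case by simp
next
  case (Cons a xs b ys m ms)
  have le: "sum_list (map (\<lambda>(y,m). of_nat m * poly Q y) (zip xs ms)) \<le> sum_list (map (\<lambda>(y,m). of_nat m * poly Q y) (zip ys ms))"
    if "length xs = length ys" "length ys = length ms" "\<forall>m\<in>set ms. 0 < m"
       "\<forall>(a,b)\<in>set (zip xs ys). a \<noteq> b \<longrightarrow> poly Q a < poly Q b" for xs ys ms
    using that
  proof (induction xs ys ms rule: list_induct3)
    case Nil then show ?case by simp
  next
    case (Cons a xs b ys m ms)
    have "of_nat m * poly Q a \<le> of_nat m * poly Q b"
      using Cons.prems by (cases "a = b") (auto intro: mult_left_mono less_imp_le)
    then show ?case using Cons by (auto intro: add_mono)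
  qed
  have l2: "sum_list (map (\<lambda>(y,m). of_nat m * poly Q y) (zip xs ms)) \<le> sum_list (map (\<lambda>(y,m). of_nat m * poly Q y) (zip ys ms))"
    using Cons by (intro le) auto
  have ab: "a = b"
  proof (rule ccontr)
    assume "a \<noteq> b"
    hence "poly Q a < poly Q b" using Cons.prems by auto
    hence "of_nat m * poly Q a < of_nat m * poly Q b" using Cons.prems by simp
    thus False using l2 Cons.prems(3) by simp
  qed
  then show ?case using Cons by auto
qed




lemma map_of_real_add: "map_poly (of_real::real\<Rightarrow>complex) (p + q) = map_poly of_real p + map_poly of_real q"
  by (intro poly_eqI) (simp add: coeff_map_poly)

lemma map_of_real_mult: "map_poly (of_real::real\<Rightarrow>complex) (p * q) = map_poly of_real p * map_poly of_real q"
proof (induction p)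
  case 0 then show ?case by simp
next
  case (pCons a p)
  have "map_poly (of_real::real\<Rightarrow>complex) (pCons a p * q) = map_poly of_real (smult a q + pCons 0 (p*q))"
    by simp
  also have "\<dots> = smult (of_real a) (map_poly of_real q) + pCons 0 (map_poly of_real p * map_poly of_real q)"
    by (simp add: map_of_real_add map_poly_smult map_poly_pCons pCons.IH)
  also have "\<dots> = map_poly of_real (pCons a p) * map_poly (of_real::real\<Rightarrow>complex) q"
    by (simp add: map_poly_pCons)
  finally show ?case .
qed

lemma poly_map_of_real: "poly (map_poly (of_real::real\<Rightarrow>complex) p) (of_real x) = of_real (poly p x)"
  by (induction p) (auto simp: map_poly_pCons)

lemma order_linear_gen: "order y [:-x,1:] = (if y = x then 1 else 0)"
proof (cases "y = x")
  case True then show ?thesis using order_power_n_n[of x 1] by simp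
next
  case False then show ?thesis by (simp add: order_0I)
qed

lemma hyp_factor:
  fixes h :: "real poly"
  assumes "lead_coeff h = 1" "hyperbolic h" "finite S" "{x. poly h x = 0} \<subseteq> S"
  shows "h = (\<Prod>y\<in>S. [:-y,1:]^(order y h))"
  using assms
proof (induction "degree h" arbitrary: h S rule: less_induct)
  case less
  show ?case
  proof (cases "degree h = 0")
    case True
    then have h1: "h = 1" using less.prems(1) by (metis coeff_pCons_0 degree_eq_zeroE one_pCons pCons_0_0)
    have "(\<Prod>y\<in>S. [:-y,1:]^(order y h)) = (\<Prod>y\<in>S. 1)"
      by (intro prod.cong) (simp_all add: h1 order_0I)
    then show ?thesis using h1 by simp
  next
    case False
    define H where "H = map_poly (of_real::real\<Rightarrow>complex) h"
    have "degree H = degree h" unfolding H_def by (simp add: degree_map_poly)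
    hence "\<not> (\<exists>a l. a \<noteq> 0 \<and> l = 0 \<and> H = pCons a l)" using False by auto
    then obtain z where z: "poly H z = 0" using fundamental_theorem_of_algebra_alt by blast
    then have "z \<in> \<real>" using less.prems(2) unfolding hyperbolic_def H_def by blast
    then obtain x where zx: "z = of_real x" by (auto elim: Reals_cases)
    have hx: "poly h x = 0" using z poly_map_of_real[of h x] unfolding zx H_def by simp
    then obtain g where hg: "h = [:-x,1:] * g" using poly_eq_0_iff_dvd by (metis dvdE)
    have "lead_coeff h = lead_coeff [:-x,1:] * lead_coeff g" unfolding hg by (rule lead_coeff_mult)
    hence g1: "lead_coeff g = 1" using less.prems(1) by simp
    hence g0: "g \<noteq> 0" by auto
    have "degree h = degree [:-x,1:] + degree g" unfolding hg using g0 by (intro degree_mult_eq) auto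
    hence dg: "degree g < degree h" by simp
    have hypg: "hyperbolic g" unfolding hyperbolic_def
    proof (intro allI impI)
      fix w :: complex assume "poly (map_poly of_real g) w = 0"
      hence "poly (map_poly of_real h) w = 0" unfolding hg map_of_real_mult by simp
      thus "w \<in> \<real>" using less.prems(2) unfolding hyperbolic_def by blast
    qed
    have rg: "{x. poly g x = 0} \<subseteq> S" using less.prems(4) unfolding hg by auto
    have IH: "g = (\<Prod>y\<in>S. [:-y,1:]^(order y g))"
      using less.hyps[OF dg g1 hypg less.prems(3) rg] .
    have xS: "x \<in> S" using hx less.prems(4) by auto
    have oh: "order y h = (if y = x then 1 else 0) + order y g" for y
    proof -
      have h0: "[:-x,1:] * g \<noteq> 0" using less.prems(1) hg by auto
      show ?thesis unfolding hg order_mult[OF h0] by (simp add: order_linear_gen)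
    qed
    have "(\<Prod>y\<in>S. [:-y,1:]^(order y h)) = (\<Prod>y\<in>S. (if y = x then [:-x,1:] else 1) * [:-y,1:]^(order y g))"
      by (intro prod.cong) (simp_all add: oh power_add)
    also have "\<dots> = (\<Prod>y\<in>S. (if y = x then [:-x,1:] else 1)) * g"
      by (subst prod.distrib) (simp add: IH[symmetric])
    also have "\<dots> = h" using xS less.prems(3) by (simp add: hg)
    finally show ?thesis by simp
  qed
qed




lemma pp_map: "pp xs (map g xs) = prod_list (map (\<lambda>x. [:-x,1:]^(g x)) xs)"
  by (induction xs) (simp_all add: pp_Nil pp_Cons)

lemma pp_app_rep: "pp (replicate (length b) x @ ys) (b @ ms) = [:-x,1:]^(sum_list b) * pp ys ms"
  by (induction b) (simp_all add: pp_Cons power_add mult.assoc)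

definition ex :: "real list \<Rightarrow> nat list list \<Rightarrow> real list" where
  "ex xs bs = concat (map (\<lambda>(x,b). replicate (length b) x) (zip xs bs))"

lemma expand:
  assumes "length xs = length bs"
  shows "pp xs (map sum_list bs) = pp (ex xs bs) (concat bs) \<and> length (ex xs bs) = length (concat bs)
    \<and> set (ex xs bs) \<subseteq> set xs \<and> (sorted xs \<longrightarrow> sorted (ex xs bs))"
  using assms
proof (induction xs bs rule: list_induct2)
  case Nil then show ?case by (simp add: ex_def)
next
  case (Cons x xs b bs)
  have e: "ex (x#xs) (b#bs) = replicate (length b) x @ ex xs bs" by (simp add: ex_def)
  show ?case unfolding e using Cons
    by (auto simp: pp_Cons pp_app_rep sorted_append)
qed

lemma rep:
  assumes "h \<in> H_su d s u f"
  shows "\<exists>ys. length ys = length u \<and> sorted ys \<and> h = pp ys u"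
proof -
  have hm: "lead_coeff h = 1" and hh: "hyperbolic h" and cl: "comp_le (mult_vec h) u"
    using assms unfolding H_su_def H_s_def monic_deg_def by auto
  have h0: "h \<noteq> 0" using hm by auto
  define Z where "Z = {x. poly h x = 0}"
  have fZ: "finite Z" unfolding Z_def using poly_roots_finite[OF h0] .
  define xs where "xs = sorted_list_of_set Z"
  have sx: "sorted xs" and dx: "distinct xs" and stx: "set xs = Z"
    unfolding xs_def using fZ by auto
  have "h = (\<Prod>y\<in>Z. [:-y,1:]^(order y h))"
    using hyp_factor[OF hm hh fZ] unfolding Z_def by blast
  also have "\<dots> = prod_list (map (\<lambda>y. [:-y,1:]^(order y h)) xs)"
    using prod.distinct_set_conv_list[OF dx, of "\<lambda>y. [:-y,1:]^(order y h)"] stx by simp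
  also have "\<dots> = pp xs (map (\<lambda>y. order y h) xs)" by (simp add: pp_map)
  finally have hp: "h = pp xs (map (\<lambda>y. order y h) xs)" .
  obtain bs where bs: "concat bs = u" "map sum_list bs = mult_vec h"
    using cl unfolding comp_le_def by auto
  have mv: "mult_vec h = map (\<lambda>y. order y h) xs" unfolding mult_vec_def xs_def Z_def by simp
  have lb: "length xs = length bs" using bs(2) mv by (metis length_map)
  have "map sum_list bs = map (\<lambda>y. order y h) xs" using bs(2) mv by simp
  hence "h = pp xs (map sum_list bs)" using hp by metis
  with expand[OF lb] bs(1) sx show ?thesis by auto
qed

theorem mainTheorem5:
  fixes d s :: nat and f :: "real poly" and u :: "nat list"
  assumes "d \<ge> 1"
    and "monic_deg d f" and "hyperbolic f"
    and "s \<le> d"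
    and "composition d u" and "length u \<le> s"
  shows "\<forall>h1 \<in> H_su d s u f. \<forall>h2 \<in> H_su d s u f. h1 = h2"
proof (intro ballI)
  fix h1 h2 assume h1: "h1 \<in> H_su d s u f" and h2: "h2 \<in> H_su d s u f"
  obtain ys1 where y1: "length ys1 = length u" "sorted ys1" "h1 = pp ys1 u" using rep[OF h1] by blast
  obtain ys2 where y2: "length ys2 = length u" "sorted ys2" "h2 = pp ys2 u" using rep[OF h2] by blast
  have upos: "\<forall>m\<in>set u. 0 < m" and su: "sum_list u = d" using assms(5) unfolding composition_def by auto
  have un: "u \<noteq> []" using su assms(1) by auto
  have ne: "ys1 \<noteq> []" using y1(1) un by auto
  obtain q e where sp: "SP ys1 ys2 q e" using SP_exists[of ys1 ys2] y1 y2 ne by auto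
  have dq: "degree q \<le> length u - 1" using sp y1(1) unfolding SP_def by simp
  obtain Q where Q: "pderiv Q = q" "degree Q \<le> degree q + 1" using antideriv by blast
  have dQ: "degree Q \<le> s" using Q(2) dq assms(6) un by (cases u) auto
  have H1: "monic_deg d h1" "\<forall>i. 1 \<le> i \<and> i \<le> s \<longrightarrow> hcoeff d h1 i = hcoeff d f i"
    using h1 unfolding H_su_def H_s_def by auto
  have H2: "monic_deg d h2" "\<forall>i. 1 \<le> i \<and> i \<le> s \<longrightarrow> hcoeff d h2 i = hcoeff d f i"
    using h2 unfolding H_su_def H_s_def by auto
  have co: "\<forall>i\<ge>d - s. coeff h1 i = coeff h2 i"
  proof (intro allI impI)
    fix i assume i: "d - s \<le> i"
    show "coeff h1 i = coeff h2 i"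
    proof (cases "d < i")
      case True then show ?thesis using H1(1) H2(1) unfolding monic_deg_def by (simp add: coeff_eq_0)
    next
      case False
      show ?thesis
      proof (cases "i = d")
        case True then show ?thesis using H1(1) H2(1) unfolding monic_deg_def by metis
      next
        case False
        hence "1 \<le> d - i" "d - i \<le> s" "d - (d - i) = i" using \<open>\<not> d < i\<close> i by auto
        thus ?thesis using H1(2) H2(2) unfolding hcoeff_def by metis
      qed
    qed
  qed
  have "res h1 Q = res h2 Q"
    using H1(1) H2(1) assms(1) dQ co unfolding monic_deg_def by (intro res_eq[where d=d and s=s]) auto
  hence eqs: "sum_list (map (\<lambda>(y,m). of_nat m * poly Q y) (zip ys1 u)) = sum_list (map (\<lambda>(y,m). of_nat m * poly Q y) (zip ys2 u))"
    using y1(3) y2(3) by (simp add: res_pp)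
  have mono: "\<forall>(a,b)\<in>set (zip ys1 ys2). a \<noteq> b \<longrightarrow> poly Q a < poly Q b"
    using SP_Q[OF sp Q(1)] by blast
  have "ys1 = ys2" using sum_eq_imp[OF _ _ upos mono eqs] y1(1) y2(1) by simp
  thus "h1 = h2" using y1(3) y2(3) by simp
qed


end
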